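(* Let $p\ge2$, let $A_1,\dots,A_p\subseteq V$ be pairwise disjoint, and let $O_{A_i}$ be an operator on the physical sites of $A_i$. For $\boldsymbol\lambda=(\lambda_1,\dots,\lambda_p)$ let $\mathcal Z^{\mathbf A}_{\boldsymbol\lambda}$ be the network for $\langle\psi|\exp(\sum_i\lambda_iO_{A_i})|\psi\rangle$, expanded with the fixed BP messages of the norm network, with weights $Z_{l,\boldsymbol\lambda}:=\tilde Z^{\boldsymbol\lambda}_{E(l)}/\tilde Z^{\boldsymbol\lambda}_{\emptyset}$ for $l\in\mathcal L_{\mathbf A}$ and $Z^{\mathbf A}_{\mathbf W,\boldsymbol\lambda}:=\prod_iZ_{l_i,\boldsymbol\lambda}^{\eta_i}$. Assume that for $\boldsymbol\lambda$ in a neighborhood of $0$, $\tilde Z^{\boldsymbol\lambda}_\emptyset\neq0$ and $\log\mathcal Z^{\mathbf A}_{\boldsymbol\lambda}=\log\tilde Z^{\boldsymbol\lambda}_\emptyset+\sum_{\mathbf W\text{ connected over }\mathcal L_{\mathbf A}}\phi(\mathbf W)Z^{\mathbf A}_{\mathbf W,\boldsymbol\lambda}$ with a series that can be differentiated term by term at $\boldsymbol\lambda=0$. Then the $p$-point connected correlation function satisfies $$\langle O_{A_1}\cdots O_{A_p}\rangle_c=\sum_{\substack{\mathbf W\text{ connected over }\mathcal L_{\mathbf A}\\ \mathrm{supp}(\mathbf W)\cap A_i\ne\emptyset\ \forall i\in[p]}}\phi(\mathbf W)\,\partial_{\lambda_1}\cdots\partial_{\lambda_p}Z^{\mathbf A}_{\mathbf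 W,\boldsymbol\lambda}\Big|_{\boldsymbol\lambda=0}.$$
   Context: Let $|\psi\rangle$ be a PEPS on a finite graph $G=(V,E)$ with norm network $\mathcal Z=\langle\psi|\psi\rangle>0$. The $p$-point connected correlation function is $\langle O_{A_1}\cdots O_{A_p}\rangle_c:=\partial_{\lambda_1}\cdots\partial_{\lambda_p}\log\langle\psi|\exp(\sum_i\lambda_iO_{A_i})|\psi\rangle\big|_{\boldsymbol\lambda=0}$ (for $p=2$ this is $\langle O_{A_1}O_{A_2}\rangle-\langle O_{A_1}\rangle\langle O_{A_2}\rangle$). Fix a BP fixed point of $\mathcal Z$: messages $\mu_{v\to w}$ with $I_{vw}=\mu_{v\to w}\star\mu_{w\to v}\ne0$ such that each vertex tensor contracted with all incoming messages except from $w$ is proportional to $\mu_{v\to w}$; $\mathcal P^\perp_{vw}=\mathbb 1-\mu_{v\to w}\otimes\mu_{w\to v}/I_{vw}$. For $F\subseteq E$, $\tilde Z^{\boldsymbol\lambda}_F$ is the contraction of $\mathcal Z^{\mathbf A}_{\boldsymbol\lambda}$ with $\mathcal P^\perp$ on edges of $F$ and $\mu\otimes\mu/I$ on the other edges. $\mathcal L_{\mathbf A}$ is the set of connected subgraphs of $G$ with at least one edge in which every vertex not in $A_1\cup\dots\cup A_p$ has degree $\ge2$; supports are vertex sets; compatible = vertex-disjoint. Clusters $\mathbf W=\{(l_i,\eta_i)\}$ are finite multisets of distinct elements of $\mathcal L_{\mathbf A}$ with multiplicities $\eta_i\ge1$, $\mathrm{supp}(\mathbf W)=\bigcup\mathrm{supp}(l_i)$;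 interaction graph: $\eta_i$ vertices per $l_i$, adjacent iff equal or incompatible; connected if it is connected. Ursell function $\phi(\mathbf W)=\frac1{\prod\eta_i!}\sum_C(-1)^{|E(C)|}$ over connected spanning subgraphs $C$ of the interaction graph. *)

theory Defs
  imports "HOL-Analysis.Analysis" "HOL-Library.Multiset"
begin

definition cfg :: "('v \<Rightarrow> nat) \<Rightarrow> 'v set \<Rightarrow> ('v \<Rightarrow> nat) set" where
  "cfg d S = PiE S (\<lambda>v. {..<d v})"

definition mat_id :: "'a \<Rightarrow> 'a \<Rightarrow> complex" where
  "mat_id a b = (if a = b then 1 else 0)"

fun mat_pow :: "'a set \<Rightarrow> ('a \<Rightarrow> 'a \<Rightarrow> complex) \<Rightarrow> nat \<Rightarrow> 'a \<Rightarrow> 'a \<Rightarrow> complex" where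
  "mat_pow C M 0 = mat_id"
| "mat_pow C M (Suc k) = (\<lambda>a b. \<Sum>c\<in>C. M a c * mat_pow C M k c b)"

definition mat_exp :: "'a set \<Rightarrow> ('a \<Rightarrow> 'a \<Rightarrow> complex) \<Rightarrow> 'a \<Rightarrow> 'a \<Rightarrow> complex" where
  "mat_exp C M a b = (\<Sum>k. mat_pow C M k a b / of_nat (fact k))"

text \<open>Graph: vertex set V, edge set E of 2-element subsets. Bond dimension D e on edge e,
  physical dimension d v at vertex v. PEPS tensor T v s b: physical index s, bond indices b
  (restricted to the edges incident to v).\<close>

definition incident :: "'v set set \<Rightarrow> 'v \<Rightarrow> 'v set set" where
  "incident E v = {e \<in> E. v \<in> e}"

definition bonds :: "'v set set \<Rightarrow> ('v set \<Rightarrow> nat) \<Rightarrow> ('v set \<Rightarrow> nat) set" where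
  "bonds E D = PiE E (\<lambda>e. {..<D e})"

definition peps_amp :: "'v set \<Rightarrow> 'v set set \<Rightarrow> ('v set \<Rightarrow> nat)
    \<Rightarrow> ('v \<Rightarrow> nat \<Rightarrow> ('v set \<Rightarrow> nat) \<Rightarrow> complex) \<Rightarrow> ('v \<Rightarrow> nat) \<Rightarrow> complex" where
  "peps_amp V E D T s = (\<Sum>b\<in>bonds E D. \<Prod>v\<in>V. T v (s v) (restrict b (incident E v)))"

text \<open>The generator sum_i lam_i O_{A_i} (each O_{A_i} tensored with the identity
  on the remaining sites), as a matrix on configurations of V.\<close>
definition gen_op :: "'v set \<Rightarrow> nat \<Rightarrow> (nat \<Rightarrow> 'v set)
    \<Rightarrow> (nat \<Rightarrow> ('v \<Rightarrow> nat) \<Rightarrow> ('v \<Rightarrow> nat) \<Rightarrow> complex) \<Rightarrow> (nat \<Rightarrow> real)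
    \<Rightarrow> ('v \<Rightarrow> nat) \<Rightarrow> ('v \<Rightarrow> nat) \<Rightarrow> complex" where
  "gen_op V p A Op lam s' s =
     (\<Sum>i<p. of_real (lam i) * Op i (restrict s' (A i)) (restrict s (A i))
             * (if (\<forall>v\<in>V - A i. s' v = s v) then 1 else 0))"

definition exp_val :: "'v set \<Rightarrow> 'v set set \<Rightarrow> ('v \<Rightarrow> nat) \<Rightarrow> ('v set \<Rightarrow> nat)
    \<Rightarrow> ('v \<Rightarrow> nat \<Rightarrow> ('v set \<Rightarrow> nat) \<Rightarrow> complex) \<Rightarrow> nat \<Rightarrow> (nat \<Rightarrow> 'v set)
    \<Rightarrow> (nat \<Rightarrow> ('v \<Rightarrow> nat) \<Rightarrow> ('v \<Rightarrow> nat) \<Rightarrow> complex) \<Rightarrow> (nat \<Rightarrow> real) \<Rightarrow> complex" where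
  "exp_val V E d D T p A Op lam =
     (\<Sum>s'\<in>cfg d V. \<Sum>s\<in>cfg d V. cnj (peps_amp V E D T s')
        * mat_exp (cfg d V) (gen_op V p A Op lam) s' s * peps_amp V E D T s)"

fun mixed_partial :: "nat list \<Rightarrow> ((nat \<Rightarrow> real) \<Rightarrow> complex) \<Rightarrow> (nat \<Rightarrow> real) \<Rightarrow> complex" where
  "mixed_partial [] f = f"
| "mixed_partial (i # is) f =
     (\<lambda>x. vector_derivative (\<lambda>t. mixed_partial is f (x(i := t))) (at (x i)))"

text \<open>p-point connected correlation function, lam_1..lam_p are lam 0 .. lam (p-1).\<close>
definition conn_corr where
  "conn_corr V E d D T p A Op =
     mixed_partial [0..<p] (\<lambda>lam. Ln (exp_val V E d D T p A Op lam)) (\<lambda>_. 0)"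

definition dd :: "('v set \<Rightarrow> nat) \<Rightarrow> 'v set \<Rightarrow> (nat \<times> nat) set" where
  "dd D e = {..<D e} \<times> {..<D e}"

text \<open>Vertex tensor of the norm network; y assigns a doubled (bra,ket) bond index to each
  incident edge.\<close>
definition local_norm :: "'v set set \<Rightarrow> ('v \<Rightarrow> nat) \<Rightarrow> ('v \<Rightarrow> nat \<Rightarrow> ('v set \<Rightarrow> nat) \<Rightarrow> complex)
    \<Rightarrow> 'v \<Rightarrow> ('v set \<Rightarrow> nat \<times> nat) \<Rightarrow> complex" where
  "local_norm E d T v y =
     (\<Sum>s<d v. cnj (T v s (restrict (\<lambda>e. fst (y e)) (incident E v)))
              * T v s (restrict (\<lambda>e. snd (y e)) (incident E v)))"

text \<open>mu v w is the message from v to w, a vector on the doubled index space of edge {v,w}.\<close>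
definition bp_I :: "('v set \<Rightarrow> nat) \<Rightarrow> ('v \<Rightarrow> 'v \<Rightarrow> nat \<times> nat \<Rightarrow> complex) \<Rightarrow> 'v \<Rightarrow> 'v \<Rightarrow> complex" where
  "bp_I D mu v w = (\<Sum>x\<in>dd D {v,w}. mu v w x * mu w v x)"

definition is_bp_fixed_point :: "'v set set \<Rightarrow> ('v \<Rightarrow> nat) \<Rightarrow> ('v set \<Rightarrow> nat)
    \<Rightarrow> ('v \<Rightarrow> nat \<Rightarrow> ('v set \<Rightarrow> nat) \<Rightarrow> complex) \<Rightarrow> ('v \<Rightarrow> 'v \<Rightarrow> nat \<times> nat \<Rightarrow> complex) \<Rightarrow> bool" where
  "is_bp_fixed_point E d D T mu =
     (\<forall>v w. {v,w} \<in> E \<longrightarrow> (\<exists>c::complex. \<forall>x\<in>dd D {v,w}.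
        (\<Sum>y\<in>{y \<in> PiE (incident E v) (dd D). y {v,w} = x}.
            local_norm E d T v y * (\<Prod>u\<in>{u. {u,v} \<in> E \<and> u \<noteq> w}. mu u v (y {u,v})))
        = c * mu v w x))"

definition end1 :: "'v set \<Rightarrow> 'v" where "end1 e = (SOME v. v \<in> e)"
definition end2 :: "'v set \<Rightarrow> 'v" where "end2 e = (SOME w. w \<in> e \<and> w \<noteq> end1 e)"

text \<open>Half-edge index assignments: h (v,e) is the doubled index of edge e on the side of v.\<close>
definition hconfs :: "'v set set \<Rightarrow> ('v set \<Rightarrow> nat) \<Rightarrow> ('v \<times> 'v set \<Rightarrow> nat \<times> nat) set" where
  "hconfs E D = PiE {(v,e). e \<in> E \<and> v \<in> e} (\<lambda>(v,e). dd D e)"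

text \<open>Rank-one projector mu_{v->w} (x) mu_{w->v} / I_{vw} on edge e={v,w}: leg at v contracted
  with the incoming message mu_{w->v}, leg at w with mu_{v->w}. (Symmetric in v,w.)\<close>
definition rank1 :: "('v set \<Rightarrow> nat) \<Rightarrow> ('v \<Rightarrow> 'v \<Rightarrow> nat \<times> nat \<Rightarrow> complex) \<Rightarrow> 'v set
    \<Rightarrow> ('v \<times> 'v set \<Rightarrow> nat \<times> nat) \<Rightarrow> complex" where
  "rank1 D mu e h = mu (end2 e) (end1 e) (h (end1 e, e)) * mu (end1 e) (end2 e) (h (end2 e, e))
                    / bp_I D mu (end1 e) (end2 e)"

definition perp :: "('v set \<Rightarrow> nat) \<Rightarrow> ('v \<Rightarrow> 'v \<Rightarrow> nat \<times> nat \<Rightarrow> complex) \<Rightarrow> 'v set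
    \<Rightarrow> ('v \<times> 'v set \<Rightarrow> nat \<times> nat) \<Rightarrow> complex" where
  "perp D mu e h = (if h (end1 e, e) = h (end2 e, e) then 1 else 0) - rank1 D mu e h"

definition block_tensor :: "'v set set \<Rightarrow> ('v \<Rightarrow> nat) \<Rightarrow> ('v \<Rightarrow> nat \<Rightarrow> ('v set \<Rightarrow> nat) \<Rightarrow> complex)
    \<Rightarrow> 'v set \<Rightarrow> (('v \<Rightarrow> nat) \<Rightarrow> ('v \<Rightarrow> nat) \<Rightarrow> complex) \<Rightarrow> ('v \<times> 'v set \<Rightarrow> nat \<times> nat) \<Rightarrow> complex" where
  "block_tensor E d T S M h =
     (\<Sum>s'\<in>cfg d S. \<Sum>s\<in>cfg d S.
        (\<Prod>v\<in>S. cnj (T v (s' v) (restrict (\<lambda>e. fst (h (v,e))) (incident E v))))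
        * mat_exp (cfg d S) M s' s
        * (\<Prod>v\<in>S. T v (s v) (restrict (\<lambda>e. snd (h (v,e))) (incident E v))))"

definition Ztilde :: "'v set \<Rightarrow> 'v set set \<Rightarrow> ('v \<Rightarrow> nat) \<Rightarrow> ('v set \<Rightarrow> nat)
    \<Rightarrow> ('v \<Rightarrow> nat \<Rightarrow> ('v set \<Rightarrow> nat) \<Rightarrow> complex) \<Rightarrow> ('v \<Rightarrow> 'v \<Rightarrow> nat \<times> nat \<Rightarrow> complex)
    \<Rightarrow> nat \<Rightarrow> (nat \<Rightarrow> 'v set) \<Rightarrow> (nat \<Rightarrow> ('v \<Rightarrow> nat) \<Rightarrow> ('v \<Rightarrow> nat) \<Rightarrow> complex)
    \<Rightarrow> 'v set set \<Rightarrow> (nat \<Rightarrow> real) \<Rightarrow> complex" where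
  "Ztilde V E d D T mu p A Op F lam =
     (\<Sum>h\<in>hconfs E D.
        (\<Prod>v\<in>V - (\<Union>i<p. A i). local_norm E d T v (\<lambda>e. h (v,e)))
      * (\<Prod>i<p. block_tensor E d T (A i) (\<lambda>a b. of_real (lam i) * Op i a b) h)
      * (\<Prod>e\<in>E. if e \<in> F then perp D mu e h else rank1 D mu e h))"

text \<open>A subgraph with at least one edge and no isolated vertices is represented by its edge
  set F; its vertex set (support) is the union of F.\<close>
definition edges_connected :: "'v set set \<Rightarrow> bool" where
  "edges_connected F = (\<forall>u\<in>\<Union>F. \<forall>w\<in>\<Union>F. (u,w) \<in> {(x,y). {x,y} \<in> F}\<^sup>*)"

definition polymers :: "'v set set \<Rightarrow> nat \<Rightarrow> (nat \<Rightarrow> 'v set) \<Rightarrow> 'v set set set" where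
  "polymers E p A = {F. F \<subseteq> E \<and> F \<noteq> {} \<and> edges_connected F \<and>
       (\<forall>v\<in>\<Union>F - (\<Union>i<p. A i). 2 \<le> card {e\<in>F. v \<in> e})}"

definition incompatible :: "'v set set \<Rightarrow> 'v set set \<Rightarrow> bool" where
  "incompatible l l' = (\<Union>l \<inter> \<Union>l' \<noteq> {})"

text \<open>Interaction graph of a labelled cluster (list of polymers): one vertex per copy.\<close>
definition inter_edges :: "'v set set list \<Rightarrow> nat set set" where
  "inter_edges xs = {{j,k} | j k. j < length xs \<and> k < length xs \<and> j \<noteq> k \<and>
                       (xs ! j = xs ! k \<or> incompatible (xs ! j) (xs ! k))}"

definition graph_connected :: "nat set \<Rightarrow> nat set set \<Rightarrow> bool" where
  "graph_connected N C = (\<forall>j\<in>N. \<forall>k\<in>N. (j,k) \<in> {(x,y). {x,y} \<in> C}\<^sup>*)"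

definition cluster_connected :: "'v set set multiset \<Rightarrow> bool" where
  "cluster_connected W = (W \<noteq> {#} \<and>
     graph_connected {..<size W} (inter_edges (SOME xs. mset xs = W)))"

definition ursell :: "'v set set multiset \<Rightarrow> real" where
  "ursell W = (let xs = (SOME xs. mset xs = W) in
     (\<Sum>C\<in>{C. C \<subseteq> inter_edges xs \<and> graph_connected {..<length xs} C}. (-1::real) ^ card C)
     / (\<Prod>l\<in>set_mset W. fact (count W l)))"

definition conn_clusters :: "'v set set \<Rightarrow> nat \<Rightarrow> (nat \<Rightarrow> 'v set) \<Rightarrow> 'v set set multiset set" where
  "conn_clusters E p A = {W. set_mset W \<subseteq> polymers E p A \<and> cluster_connected W}"

definition cluster_supp :: "'v set set multiset \<Rightarrow> 'v set" where
  "cluster_supp W = (\<Union>l\<in>set_mset W. \<Union>l)"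

definition cluster_weight where
  "cluster_weight V E d D T mu p A Op W lam =
     prod_mset (image_mset (\<lambda>l. Ztilde V E d D T mu p A Op l lam / Ztilde V E d D T mu p A Op {} lam) W)"

definition nbhd0 :: "nat \<Rightarrow> real \<Rightarrow> (nat \<Rightarrow> real) set" where
  "nbhd0 p \<epsilon> = {lam. \<forall>i<p. \<bar>lam i\<bar> < \<epsilon>}"

end

theory Submission
  imports Defs "HOL-Complex_Analysis.Complex_Analysis"
begin

lemma vd_local:
  fixes f g :: "real \<Rightarrow> complex"
  assumes "r > 0" "\<And>s. \<bar>s - t\<bar> < r \<Longrightarrow> f s = g s"
  shows "vector_derivative f (at t) = vector_derivative g (at t)"
proof -
  have S: "\<And>y. y \<in> ball t r \<Longrightarrow> f y = g y" using assms(2) by (simp add: dist_real_def abs_minus_commute)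
  have "\<And>D. (f has_vector_derivative D) (at t) \<longleftrightarrow> (g has_vector_derivative D) (at t)"
    using has_vector_derivative_transform_within_open[of f _ t "ball t r" g]
          has_vector_derivative_transform_within_open[of g _ t "ball t r" f] S assms(1)
    by auto
  then show ?thesis by (simp add: vector_derivative_def)
qed

lemma vd_shift:
  fixes g :: "real \<Rightarrow> complex"
  shows "vector_derivative (\<lambda>s. c + g s) (at t) = vector_derivative g (at t)"
  unfolding vector_derivative_def using has_vector_derivative_add_const[of g c]
  by (simp add: add.commute)

lemma mp_append: "mixed_partial (xs @ ys) f = mixed_partial xs (mixed_partial ys f)"
  by (induction xs) auto

lemma mp_zero: "mixed_partial xs (\<lambda>x. 0) = (\<lambda>x. 0)"
  by (induction xs) auto

lemma mp_invariant:
  assumes "\<And>x t. f (x(j:=t)) = f x"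
  shows "mixed_partial xs f (x(j:=t)) = mixed_partial xs f x"
proof (induction xs arbitrary: x t)
  case Nil show ?case by (simp only: mixed_partial.simps assms)
next
  case (Cons i xs)
  show ?case
  proof (cases "i = j")
    case True
    have "\<And>y s. mixed_partial xs f (y(j:=s)) = mixed_partial xs f y" using Cons by blast
    then show ?thesis using True by simp
  next
    case False
    have "\<And>s. x(j:=t, i:=s) = x(i:=s, j:=t)" using False by (auto simp: fun_upd_twist)
    then have e: "(\<lambda>s. mixed_partial xs f (x(j:=t, i:=s))) = (\<lambda>s. mixed_partial xs f (x(i:=s)))"
      using Cons.IH by presburger
    have xi: "(x(j:=t)) i = x i" using False by simp
    show ?thesis by (simp only: mixed_partial.simps e xi)
  qed
qed

lemma mp_zero_if_invariant:
  assumes "\<And>x t. f (x(j:=t)) = f x" "j \<in> set xs"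
  shows "mixed_partial xs f x = 0"
proof -
  obtain as bs where xs: "xs = as @ j # bs" using assms(2) split_list by metis
  have "mixed_partial (j # bs) f = (\<lambda>x. 0)"
  proof
    fix y
    have "\<And>s. mixed_partial bs f (y(j:=s)) = mixed_partial bs f y"
      using mp_invariant[OF assms(1)] by blast
    then show "mixed_partial (j # bs) f y = 0" by simp
  qed
  then show ?thesis by (simp add: xs mp_append mp_zero)
qed

lemma mp_local:
  assumes "\<forall>i\<in>set xs. i < p" "\<And>y. y \<in> nbhd0 p \<delta> \<Longrightarrow> f y = g y" "x \<in> nbhd0 p \<delta>"
  shows "mixed_partial xs f x = mixed_partial xs g x"
  using assms(1,3)
proof (induction xs arbitrary: x)
  case Nil then show ?case using assms(2) by simp
next
  case (Cons i xs)
  have ip: "i < p" using Cons by simp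
  have xi: "\<bar>x i\<bar> < \<delta>" using Cons(3) ip by (simp add: nbhd0_def)
  have "vector_derivative (\<lambda>s. mixed_partial xs f (x(i:=s))) (at (x i))
      = vector_derivative (\<lambda>s. mixed_partial xs g (x(i:=s))) (at (x i))"
  proof (rule vd_local[of "\<delta> - \<bar>x i\<bar>"])
    show "0 < \<delta> - \<bar>x i\<bar>" using xi by simp
  next
    fix s assume "\<bar>s - x i\<bar> < \<delta> - \<bar>x i\<bar>"
    then have "\<bar>s\<bar> < \<delta>" by linarith
    then have "x(i:=s) \<in> nbhd0 p \<delta>" using Cons(3) by (auto simp: nbhd0_def)
    then show "mixed_partial xs f (x(i:=s)) = mixed_partial xs g (x(i:=s))"
      using Cons by simp
  qed
  then show ?case by simp
qed

definition nrm :: "'a set \<Rightarrow> ('a \<Rightarrow> 'a \<Rightarrow> complex) \<Rightarrow> real" where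
  "nrm C M = (\<Sum>a\<in>C. \<Sum>b\<in>C. cmod (M a b))"

lemma nrm_nonneg: "nrm C M \<ge> 0"
  unfolding nrm_def by (intro sum_nonneg) auto

lemma row_le_nrm:
  assumes "finite C" "a \<in> C"
  shows "(\<Sum>c\<in>C. cmod (M a c)) \<le> nrm C M"
  unfolding nrm_def using assms
  by (intro member_le_sum) (auto intro: sum_nonneg)

lemma mat_id_norm: "cmod (mat_id a b) \<le> 1"
  by (simp add: mat_id_def)

lemma pow_bound:
  assumes "finite C" "a \<in> C"
  shows "cmod (mat_pow C M k a b) \<le> nrm C M ^ k"
  using assms(2)
proof (induction k arbitrary: a)
  case 0 then show ?case by (simp add: mat_id_norm)
next
  case (Suc k)
  have "cmod (mat_pow C M (Suc k) a b) \<le> (\<Sum>c\<in>C. cmod (M a c * mat_pow C M k c b))"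
    by (simp add: norm_sum)
  also have "\<dots> \<le> (\<Sum>c\<in>C. cmod (M a c) * nrm C M ^ k)"
    by (intro sum_mono) (auto simp: norm_mult intro: mult_left_mono Suc.IH)
  also have "\<dots> = (\<Sum>c\<in>C. cmod (M a c)) * nrm C M ^ k" by (simp add: sum_distrib_right)
  also have "\<dots> \<le> nrm C M * nrm C M ^ k"
    by (intro mult_right_mono row_le_nrm assms Suc.prems) (simp add: nrm_nonneg)
  finally show ?case by simp
qed

lemma term_bound:
  assumes "finite C" "a \<in> C"
  shows "norm (mat_pow C M k a b / of_nat (fact k)) \<le> nrm C M ^ k / fact k"
  using pow_bound[OF assms, of M k b]
  by (simp add: norm_divide divide_right_mono)

lemma summable_expbound: "summable (\<lambda>k. (x::real) ^ k / fact k)"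
  using summable_exp[of x] by (simp add: field_simps)

lemma summable_mat_exp:
  assumes "finite C" "a \<in> C"
  shows "summable (\<lambda>k. mat_pow C M k a b / of_nat (fact k))"
  by (rule summable_comparison_test'[OF summable_expbound[of "nrm C M"], where N=0])
     (use term_bound[OF assms] in blast)

lemma mat_exp_minus_id:
  assumes "finite C" "a \<in> C"
  shows "cmod (mat_exp C M a b - mat_id a b) \<le> exp (nrm C M) - 1"
proof -
  define f where "f k = mat_pow C M k a b / of_nat (fact k)" for k
  have s: "f sums mat_exp C M a b"
    unfolding f_def mat_exp_def using summable_mat_exp[OF assms] by (simp add: summable_sums)
  have f0: "f 0 = mat_id a b" by (simp add: f_def)
  have s1: "(\<lambda>k. f (Suc k)) sums (mat_exp C M a b - mat_id a b)"
    using s f0 by (simp add: sums_Suc_iff)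
  have e: "(\<lambda>k. nrm C M ^ k / fact k) sums exp (nrm C M)"
    using exp_converges[of "nrm C M"] by (simp add: real_scaleR_def divide_inverse mult.commute)
  have e1: "(\<lambda>k. nrm C M ^ Suc k / fact (Suc k)) sums (exp (nrm C M) - 1)"
  proof -
    have "(\<lambda>k. nrm C M ^ k / fact k) 0 = 1" by simp
    then show ?thesis
      using e sums_Suc_iff[of "\<lambda>k. nrm C M ^ k / fact k" "exp (nrm C M) - 1"]
      by (simp del: fact_Suc power_Suc)
  qed
  have "cmod (suminf (\<lambda>k. f (Suc k))) \<le> suminf (\<lambda>k. nrm C M ^ Suc k / fact (Suc k))"
  proof -
    have b: "\<And>k. norm (f (Suc k)) \<le> nrm C M ^ Suc k / fact (Suc k)"
      unfolding f_def by (rule term_bound[OF assms])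
    show ?thesis using norm_suminf_le[OF b sums_summable[OF e1]] .
  qed
  then show ?thesis using s1 e1 by (simp add: sums_iff)
qed

definition lin :: "complex \<Rightarrow> ('a \<Rightarrow> 'a \<Rightarrow> complex) \<Rightarrow> ('a \<Rightarrow> 'a \<Rightarrow> complex) \<Rightarrow> 'a \<Rightarrow> 'a \<Rightarrow> complex" where
  "lin z M N = (\<lambda>a b. z * M a b + N a b)"

lemma nrm_lin:
  "nrm C (lin z M N) \<le> cmod z * nrm C M + nrm C N"
proof -
  have "nrm C (lin z M N) \<le> (\<Sum>a\<in>C. \<Sum>b\<in>C. cmod z * cmod (M a b) + cmod (N a b))"
    unfolding nrm_def lin_def
    by (intro sum_mono) (metis norm_mult norm_triangle_ineq)
  also have "\<dots> = cmod z * nrm C M + nrm C N"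
    by (simp add: nrm_def sum.distrib sum_distrib_left)
  finally show ?thesis .
qed

lemma mat_pow_lin_holo:
  "(\<lambda>z. mat_pow C (lin z M N) k a b) holomorphic_on S"
proof (induction k arbitrary: a)
  case 0 then show ?case by simp
next
  case (Suc k)
  show ?case unfolding mat_pow.simps lin_def
    by (intro holomorphic_intros Suc.IH[unfolded lin_def])
qed

lemma mat_exp_lin_holo:
  assumes "finite C" "a \<in> C"
  shows "(\<lambda>z. mat_exp C (lin z M N) a b) holomorphic_on UNIV"
proof -
  have "(\<lambda>z. mat_exp C (lin z M N) a b) field_differentiable at z0" for z0
  proof -
    define r where "r = cmod z0 + 1"
    define R where "R = r * nrm C M + nrm C N"
    define f where "f k z = mat_pow C (lin z M N) k a b / of_nat (fact k)" for k z
    have ul: "uniform_limit (cball 0 r) (\<lambda>n z. \<Sum>i<n. f i z) (\<lambda>z. suminf (\<lambda>i. f i z)) sequentially"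
    proof (rule Weierstrass_m_test)
      fix n z assume z: "z \<in> cball (0::complex) r"
      have "norm (f n z) \<le> nrm C (lin z M N) ^ n / fact n"
        unfolding f_def by (rule term_bound[OF assms])
      also have "\<dots> \<le> R ^ n / fact n"
      proof -
        have "nrm C (lin z M N) \<le> R"
          using nrm_lin[of C z M N] z unfolding R_def
          by (smt (verit) mem_cball_0 mult_right_mono nrm_nonneg)
        then show ?thesis
          by (intro divide_right_mono power_mono) (auto simp: nrm_nonneg)
      qed
      finally show "norm (f n z) \<le> R ^ n / fact n" .
    next
      show "summable (\<lambda>n. R ^ n / fact n)" by (rule summable_expbound)
    qed
    have hol: "\<forall>\<^sub>F n in sequentially. continuous_on (cball 0 r) (\<lambda>z. \<Sum>i<n. f i z) \<and>
                 (\<lambda>z. \<Sum>i<n. f i z) holomorphic_on ball 0 r"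
    proof (intro always_eventually allI conjI)
      fix n
      have h: "(\<lambda>z. \<Sum>i<n. f i z) holomorphic_on UNIV"
        unfolding f_def by (intro holomorphic_intros mat_pow_lin_holo) simp
      then show "continuous_on (cball 0 r) (\<lambda>z. \<Sum>i<n. f i z)"
        using holomorphic_on_imp_continuous_on holomorphic_on_subset by blast
      show "(\<lambda>z. \<Sum>i<n. f i z) holomorphic_on ball 0 r"
        using h holomorphic_on_subset by blast
    qed
    obtain "(\<lambda>z. suminf (\<lambda>i. f i z)) holomorphic_on ball 0 r"
      using holomorphic_uniform_limit[OF hol ul] by auto
    moreover have "(\<lambda>z. suminf (\<lambda>i. f i z)) = (\<lambda>z. mat_exp C (lin z M N) a b)"
      by (simp add: f_def mat_exp_def)
    moreover have "z0 \<in> ball 0 r" by (simp add: r_def)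
    ultimately show ?thesis
      using holomorphic_on_imp_differentiable_at open_ball by metis
  qed
  then show ?thesis by (simp add: holomorphic_on_def field_differentiable_at_within)
qed

lemma small_2pi_int:
  fixes n :: int
  assumes "cmod (of_int (2 * n) * pi * \<i>) < 2 * pi"
  shows "n = 0"
proof -
  have "cmod (of_int (2 * n) * pi * \<i>) = 2 * \<bar>real_of_int n\<bar> * pi"
    by (simp add: norm_mult abs_mult)
  show ?thesis
  proof (rule ccontr)
    assume "n \<noteq> 0"
    then have "1 \<le> \<bar>real_of_int n\<bar>" by linarith
    then have "2 * pi \<le> 2 * \<bar>real_of_int n\<bar> * pi"
      using pi_gt_zero by (simp add: mult_right_mono)
    then show False using assms \<open>cmod _ = _\<close> by linarith
  qed
qed

lemma log_deriv:
  fixes g h :: "real \<Rightarrow> complex"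
  assumes cont: "continuous (at t) g"
    and r: "r > 0" and ev: "\<And>s. \<bar>s - t\<bar> < r \<Longrightarrow> exp (g s) = h s"
    and hd: "(h has_vector_derivative h') (at t)"
    and nz: "h t \<noteq> 0"
  shows "(g has_vector_derivative h' / h t) (at t)"
proof -
  define q where "q s = g t + Ln (h s / h t)" for s
  have qd: "(q has_vector_derivative h' / h t) (at t)"
  proof -
    have k: "((\<lambda>s. h s / h t) has_vector_derivative h' / h t) (at t)"
      using bounded_linear.has_vector_derivative[OF bounded_linear_divide hd] .
    have l: "(Ln has_field_derivative inverse ((\<lambda>s. h s / h t) t)) (at ((\<lambda>s. h s / h t) t))"
      using nz by (intro has_field_derivative_Ln) simp
    have "((Ln \<circ> (\<lambda>s. h s / h t)) has_vector_derivative (h' / h t * inverse ((\<lambda>s. h s / h t) t))) (at t)"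
      by (rule field_vector_diff_chain_at[OF k l])
    then have "((\<lambda>s. Ln (h s / h t)) has_vector_derivative h' / h t) (at t)"
      using nz by (simp add: o_def)
    then show ?thesis unfolding q_def
      using has_vector_derivative_add_const[of "\<lambda>s. Ln (h s / h t)" "g t"]
      by (simp add: add.commute)
  qed
  have gc: "(g \<longlongrightarrow> g t) (at t)" using cont continuous_at by blast
  have hc: "(h \<longlongrightarrow> h t) (at t)"
    using has_vector_derivative_continuous[OF hd] continuous_at by blast
  have lc: "((\<lambda>s. Ln (h s / h t)) \<longlongrightarrow> Ln (h t / h t)) (at t)"
    by (rule tendsto_Ln[OF tendsto_divide[OF hc tendsto_const nz]]) (simp add: nz)
  have dc: "((\<lambda>s. g s - q s) \<longlongrightarrow> 0) (at t)"
    unfolding q_def using tendsto_diff[OF gc tendsto_add[OF tendsto_const lc, of "g t"]] nz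
    by simp
  have e1: "\<forall>\<^sub>F s in at t. cmod (g s - q s) < 2 * pi"
    using tendstoD[OF dc, of "2*pi"] by (simp add: dist_norm)
  have e2: "\<forall>\<^sub>F s in at t. h s \<noteq> 0" using tendsto_imp_eventually_ne[OF hc nz] .
  have e3: "\<forall>\<^sub>F s in at t. exp (g s) = h s"
    unfolding eventually_at using r ev by (auto simp: dist_real_def)
  have "\<forall>\<^sub>F s in at t. g s = q s"
  proof (rule eventually_mono[OF eventually_conj[OF e1 eventually_conj[OF e2 e3]]])
    fix s assume a: "cmod (g s - q s) < 2 * pi \<and> h s \<noteq> 0 \<and> exp (g s) = h s"
    have "exp (q s) = exp (g t) * (h s / h t)" using a nz by (simp add: q_def exp_add)
    also have "\<dots> = h s"
      using ev[of t] r nz by simp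
    finally have "exp (g s) = exp (q s)" using a by simp
    then obtain n :: int where n: "g s = q s + of_int (2 * n) * pi * \<i>" using exp_eq by blast
    then have "cmod (of_int (2 * n) * pi * \<i>) < 2 * pi" using a by simp
    then have "n = 0" by (rule small_2pi_int)
    then show "g s = q s" using n by simp
  qed
  then have "\<forall>\<^sub>F s in nhds t. s \<in> UNIV \<longrightarrow> q s = g s"
    unfolding eventually_at_filter by (auto elim!: eventually_mono simp: q_def nz)
  moreover have "q t = g t" by (simp add: q_def nz)
  ultimately show ?thesis using has_vector_derivative_cong_ev[where f=q and g=g and S=UNIV and x=t] qd by simp
qed

lemma local_norm_cong:
  assumes "\<And>e. e \<in> incident E v \<Longrightarrow> y e = y' e"
  shows "local_norm E d T v y = local_norm E d T v y'"
proof -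
  have "restrict (\<lambda>e. fst (y e)) (incident E v) = restrict (\<lambda>e. fst (y' e)) (incident E v)
          \<and> restrict (\<lambda>e. snd (y e)) (incident E v) = restrict (\<lambda>e. snd (y' e)) (incident E v)"
    using assms by (auto simp: restrict_def fun_eq_iff)
  then show ?thesis unfolding local_norm_def by simp
qed

lemma ends:
  assumes "e \<in> E" "E \<subseteq> {{u, w} | u w. u \<in> V \<and> w \<in> V \<and> u \<noteq> w}"
  shows "end1 e \<in> e" "end2 e \<in> e" "end1 e \<noteq> end2 e" "e = {end1 e, end2 e}"
proof -
  have "e \<in> {{u, w} | u w. u \<in> V \<and> w \<in> V \<and> u \<noteq> w}" using subsetD[OF assms(2) assms(1)] .
  then obtain u w where e: "e = {u,w}" "u \<noteq> w" by blast
  have 1: "end1 e \<in> e" unfolding end1_def by (rule someI[of _ u]) (simp add: e)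
  have "\<exists>w'. w' \<in> e \<and> w' \<noteq> end1 e"
  proof (cases "end1 e = u")
    case True then show ?thesis using e by (intro exI[of _ w]) simp
  next
    case False then show ?thesis using e by (intro exI[of _ u]) simp
  qed
  then have 2: "end2 e \<in> e \<and> end2 e \<noteq> end1 e" unfolding end2_def by (rule someI_ex)
  show "end1 e \<in> e" by (rule 1)
  show "end2 e \<in> e" "end1 e \<noteq> end2 e" using 2 by auto
  have "end1 e \<in> {u,w}" "end2 e \<in> {u,w}" using 1 2 e(1) by auto
  then have "end1 e = u \<and> end2 e = w \<or> end1 e = w \<and> end2 e = u" using 2 by blast
  then show "e = {end1 e, end2 e}" by (metis e(1) insert_commute)
qed
lemma mat_exp_scal_holo:
  assumes "finite C" "a \<in> C"
  shows "(\<lambda>z. mat_exp C (\<lambda>a b. z * M a b) a b) holomorphic_on UNIV"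
  using mat_exp_lin_holo[OF assms, of M "\<lambda>_ _. 0" b] by (simp add: lin_def)

lemma finite_cfg: "finite S \<Longrightarrow> finite (cfg d S)"
  unfolding cfg_def by (intro finite_PiE) auto

lemma block_tensor_holo:
  assumes "finite S"
  shows "(\<lambda>z. block_tensor E d T S (\<lambda>a b. z * M a b) h) holomorphic_on UNIV"
  unfolding block_tensor_def
  by (intro holomorphic_intros mat_exp_scal_holo finite_cfg assms) (auto simp: cfg_def)

lemma block_tensor_cong:
  assumes "\<And>v e. v \<in> S \<Longrightarrow> e \<in> incident E v \<Longrightarrow> h (v,e) = h' (v,e)"
  shows "block_tensor E d T S M h = block_tensor E d T S M h'"
proof -
  have r: "\<And>v. v \<in> S \<Longrightarrow> restrict (\<lambda>e. fst (h (v,e))) (incident E v) = restrict (\<lambda>e. fst (h' (v,e))) (incident E v)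
          \<and> restrict (\<lambda>e. snd (h (v,e))) (incident E v) = restrict (\<lambda>e. snd (h' (v,e))) (incident E v)"
    using assms by (auto simp: restrict_def fun_eq_iff)
  have p1: "\<And>s'. (\<Prod>v\<in>S. cnj (T v (s' v) (restrict (\<lambda>e. fst (h (v,e))) (incident E v))))
            = (\<Prod>v\<in>S. cnj (T v (s' v) (restrict (\<lambda>e. fst (h' (v,e))) (incident E v))))"
    by (rule prod.cong) (use r in auto)
  have p2: "\<And>s. (\<Prod>v\<in>S. T v (s v) (restrict (\<lambda>e. snd (h (v,e))) (incident E v)))
            = (\<Prod>v\<in>S. T v (s v) (restrict (\<lambda>e. snd (h' (v,e))) (incident E v)))"
    by (rule prod.cong) (use r in auto)
  show ?thesis unfolding block_tensor_def p1 p2 ..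
qed

lemma sum_PiE_split:
  assumes fin: "finite H1" "finite H2" and disj: "H1 \<inter> H2 = {}"
    and P: "\<And>h h'. (\<forall>x\<in>H1. h x = h' x) \<Longrightarrow> P h = P h'"
    and Q: "\<And>h h'. (\<forall>x\<in>H2. h x = h' x) \<Longrightarrow> Q h = Q h'"
  shows "(\<Sum>h\<in>PiE (H1 \<union> H2) S. P h * Q h) = (\<Sum>h\<in>PiE H1 S. P h) * (\<Sum>h\<in>PiE H2 S. (Q h :: 'c::comm_semiring_1))"
proof -
  define mg where "mg = (\<lambda>(h1::'a\<Rightarrow>'b, h2::'a\<Rightarrow>'b). (\<lambda>x. if x \<in> H1 then h1 x else h2 x))"
  have "(\<Sum>h\<in>PiE (H1 \<union> H2) S. P h * Q h) = (\<Sum>hh\<in>PiE H1 S \<times> PiE H2 S. P (fst hh) * Q (snd hh))"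
  proof (rule sum.reindex_bij_witness[where i=mg and j="\<lambda>h. (restrict h H1, restrict h H2)"])
    fix a assume a: "a \<in> PiE (H1 \<union> H2) S"
    show "mg (restrict a H1, restrict a H2) = a"
      using a by (auto simp: mg_def fun_eq_iff PiE_def extensional_def)
    show "(restrict a H1, restrict a H2) \<in> PiE H1 S \<times> PiE H2 S"
      using a by (auto simp: PiE_def Pi_def)
    show "P (fst (restrict a H1, restrict a H2)) * Q (snd (restrict a H1, restrict a H2)) = P a * Q a"
      using P[of "restrict a H1" a] Q[of "restrict a H2" a] by simp
  next
    fix b assume b: "b \<in> PiE H1 S \<times> PiE H2 S"
    show "(restrict (mg b) H1, restrict (mg b) H2) = b"
      using b disj by (cases b) (auto simp: mg_def fun_eq_iff PiE_def extensional_def)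
    show "mg b \<in> PiE (H1 \<union> H2) S"
      using b disj by (cases b) (auto simp: mg_def PiE_def Pi_def extensional_def)
  qed
  also have "\<dots> = (\<Sum>h1\<in>PiE H1 S. \<Sum>h2\<in>PiE H2 S. P h1 * Q h2)"
    by (simp add: sum.cartesian_product case_prod_beta)
  also have "\<dots> = (\<Sum>h\<in>PiE H1 S. P h) * (\<Sum>h\<in>PiE H2 S. Q h)"
    by (simp add: sum_product)
  finally show ?thesis .
qed

lemma perp_cong:
  assumes "h (end1 e, e) = h' (end1 e, e)" "h (end2 e, e) = h' (end2 e, e)"
  shows "perp D mu e h = perp D mu e h'" "rank1 D mu e h = rank1 D mu e h'"
  using assms by (simp_all add: perp_def rank1_def)

lemma finite_E:
  assumes "finite V" "E \<subseteq> {{u, w} | u w. u \<in> V \<and> w \<in> V \<and> u \<noteq> w}"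
  shows "finite E"
proof -
  have "E \<subseteq> Pow V" using assms(2) by blast
  then show ?thesis using assms(1) finite_subset by blast
qed

lemma Ztilde_factor:
  fixes V :: "'v set" and E :: "'v set set" and d :: "'v \<Rightarrow> nat" and D :: "'v set \<Rightarrow> nat"
    and T :: "'v \<Rightarrow> nat \<Rightarrow> ('v set \<Rightarrow> nat) \<Rightarrow> complex"
    and mu :: "'v \<Rightarrow> 'v \<Rightarrow> nat \<times> nat \<Rightarrow> complex"
    and p :: nat and A :: "nat \<Rightarrow> 'v set"
    and Op :: "nat \<Rightarrow> ('v \<Rightarrow> nat) \<Rightarrow> ('v \<Rightarrow> nat) \<Rightarrow> complex"
  assumes finV: "finite V"
    and graph: "E \<subseteq> {{u, w} | u w. u \<in> V \<and> w \<in> V \<and> u \<noteq> w}"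
    and A_sub: "\<forall>i<p. A i \<subseteq> V"
    and A_disj: "\<forall>i<p. \<forall>j<p. i \<noteq> j \<longrightarrow> A i \<inter> A j = {}"
    and jp: "j < p"
  obtains Bc :: "complex \<Rightarrow> complex" and Rf where "Bc holomorphic_on UNIV"
    "\<And>F lam. \<Union>F \<inter> A j = {} \<Longrightarrow> Ztilde V E d D T mu p A Op F lam = Bc (of_real (lam j)) * Rf F lam"
    "\<And>F lam t. Rf F (lam(j:=t)) = Rf F lam"
proof -
  have finE: "finite E" by (rule finite_E[OF finV graph])
  define H1 where "H1 = {(v,e). e \<in> E \<and> v \<in> e \<and> v \<in> A j}"
  define H2 where "H2 = {(v,e). e \<in> E \<and> v \<in> e \<and> v \<notin> A j}"
  define Sd :: "'v \<times> 'v set \<Rightarrow> (nat \<times> nat) set" where "Sd = (\<lambda>(v,e). dd D e)"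
  define Ej where "Ej = {e \<in> E. e \<inter> A j \<noteq> {}}"
  define a1 where "a1 e x = mu (end2 e) (end1 e) x" for e x
  define a2 where "a2 e x = mu (end1 e) (end2 e) x" for e x
  define PP where "PP z h = block_tensor E d T (A j) (\<lambda>a b. z * Op j a b) h *
      (\<Prod>e\<in>Ej. (if end1 e \<in> A j then a1 e (h (end1 e, e)) else 1) *
                (if end2 e \<in> A j then a2 e (h (end2 e, e)) else 1))" for z h
  define QQ where "QQ F lam h =
      (\<Prod>v\<in>V - (\<Union>i<p. A i). local_norm E d T v (\<lambda>e. h (v,e))) *
      (\<Prod>i\<in>{..<p}-{j}. block_tensor E d T (A i) (\<lambda>a b. of_real (lam i) * Op i a b) h) *
      (\<Prod>e\<in>E - Ej. if e \<in> F then perp D mu e h else rank1 D mu e h) *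
      (\<Prod>e\<in>Ej. (if end1 e \<notin> A j then a1 e (h (end1 e, e)) else 1) *
                (if end2 e \<notin> A j then a2 e (h (end2 e, e)) else 1) / bp_I D mu (end1 e) (end2 e))"
    for F lam h
  define Bc where "Bc z = (\<Sum>h\<in>PiE H1 Sd. PP z h)" for z
  have finH1: "finite H1"
    by (rule finite_subset[of _ "V \<times> E"]) (use graph finV finE in \<open>auto simp: H1_def\<close>)
  have finH2: "finite H2"
    by (rule finite_subset[of _ "V \<times> E"]) (use graph finV finE in \<open>auto simp: H2_def\<close>)
  have finAj: "finite (A j)" using A_sub jp finV finite_subset by blast
  have hol: "Bc holomorphic_on UNIV"
    unfolding Bc_def PP_def
    by (intro holomorphic_intros block_tensor_holo finAj)
  have PPloc: "PP z h = PP z h'" if ag: "\<forall>x\<in>H1. h x = h' x" for z h h'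
  proof -
    have "block_tensor E d T (A j) (\<lambda>a b. z * Op j a b) h = block_tensor E d T (A j) (\<lambda>a b. z * Op j a b) h'"
      by (rule block_tensor_cong) (use ag in \<open>auto simp: H1_def incident_def\<close>)
    moreover have "(\<Prod>e\<in>Ej. (if end1 e \<in> A j then a1 e (h (end1 e, e)) else 1) *
                (if end2 e \<in> A j then a2 e (h (end2 e, e)) else 1)) =
          (\<Prod>e\<in>Ej. (if end1 e \<in> A j then a1 e (h' (end1 e, e)) else 1) *
                (if end2 e \<in> A j then a2 e (h' (end2 e, e)) else 1))"
    proof (rule prod.cong[OF refl])
      fix e assume e: "e \<in> Ej"
      then have eE: "e \<in> E" by (simp add: Ej_def)
      have "end1 e \<in> A j \<Longrightarrow> h (end1 e, e) = h' (end1 e, e)"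
        using ag ends(1)[OF eE graph] eE by (auto simp: H1_def)
      moreover have "end2 e \<in> A j \<Longrightarrow> h (end2 e, e) = h' (end2 e, e)"
        using ag ends(2)[OF eE graph] eE by (auto simp: H1_def)
      ultimately show "(if end1 e \<in> A j then a1 e (h (end1 e, e)) else 1) *
                (if end2 e \<in> A j then a2 e (h (end2 e, e)) else 1) =
            (if end1 e \<in> A j then a1 e (h' (end1 e, e)) else 1) *
                (if end2 e \<in> A j then a2 e (h' (end2 e, e)) else 1)" by simp
    qed
    ultimately show ?thesis unfolding PP_def by simp
  qed
  have QQloc: "QQ F lam h = QQ F lam h'" if ag: "\<forall>x\<in>H2. h x = h' x" for F lam h h'
  proof -
    have q1: "(\<Prod>v\<in>V - (\<Union>i<p. A i). local_norm E d T v (\<lambda>e. h (v,e))) =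
              (\<Prod>v\<in>V - (\<Union>i<p. A i). local_norm E d T v (\<lambda>e. h' (v,e)))"
    proof (rule prod.cong[OF refl])
      fix v assume v: "v \<in> V - (\<Union>i<p. A i)"
      then have "v \<notin> A j" using jp by blast
      then show "local_norm E d T v (\<lambda>e. h (v,e)) = local_norm E d T v (\<lambda>e. h' (v,e))"
        by (intro local_norm_cong) (use ag in \<open>auto simp: H2_def incident_def\<close>)
    qed
    have q2: "(\<Prod>i\<in>{..<p}-{j}. block_tensor E d T (A i) (\<lambda>a b. of_real (lam i) * Op i a b) h) =
              (\<Prod>i\<in>{..<p}-{j}. block_tensor E d T (A i) (\<lambda>a b. of_real (lam i) * Op i a b) h')"
    proof (rule prod.cong[OF refl])
      fix i assume i: "i \<in> {..<p}-{j}"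
      then have "A i \<inter> A j = {}" using A_disj jp by auto
      then show "block_tensor E d T (A i) (\<lambda>a b. of_real (lam i) * Op i a b) h =
                 block_tensor E d T (A i) (\<lambda>a b. of_real (lam i) * Op i a b) h'"
        by (intro block_tensor_cong) (use ag in \<open>auto simp: H2_def incident_def\<close>)
    qed
    have q3: "(\<Prod>e\<in>E - Ej. if e \<in> F then perp D mu e h else rank1 D mu e h) =
              (\<Prod>e\<in>E - Ej. if e \<in> F then perp D mu e h' else rank1 D mu e h')"
    proof (rule prod.cong[OF refl])
      fix e assume e: "e \<in> E - Ej"
      then have eE: "e \<in> E" and ej: "e \<inter> A j = {}" by (auto simp: Ej_def)
      have "h (end1 e, e) = h' (end1 e, e)" "h (end2 e, e) = h' (end2 e, e)"
        using ag ends(1,2)[OF eE graph] eE ej by (auto simp: H2_def)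
      then show "(if e \<in> F then perp D mu e h else rank1 D mu e h) =
                 (if e \<in> F then perp D mu e h' else rank1 D mu e h')"
        using perp_cong by metis
    qed
    have q4: "(\<Prod>e\<in>Ej. (if end1 e \<notin> A j then a1 e (h (end1 e, e)) else 1) *
                (if end2 e \<notin> A j then a2 e (h (end2 e, e)) else 1) / bp_I D mu (end1 e) (end2 e)) =
              (\<Prod>e\<in>Ej. (if end1 e \<notin> A j then a1 e (h' (end1 e, e)) else 1) *
                (if end2 e \<notin> A j then a2 e (h' (end2 e, e)) else 1) / bp_I D mu (end1 e) (end2 e))"
    proof (rule prod.cong[OF refl])
      fix e assume e: "e \<in> Ej"
      then have eE: "e \<in> E" by (simp add: Ej_def)
      have "end1 e \<notin> A j \<Longrightarrow> h (end1 e, e) = h' (end1 e, e)"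
        using ag ends(1)[OF eE graph] eE by (auto simp: H2_def)
      moreover have "end2 e \<notin> A j \<Longrightarrow> h (end2 e, e) = h' (end2 e, e)"
        using ag ends(2)[OF eE graph] eE by (auto simp: H2_def)
      ultimately show "(if end1 e \<notin> A j then a1 e (h (end1 e, e)) else 1) *
                (if end2 e \<notin> A j then a2 e (h (end2 e, e)) else 1) / bp_I D mu (end1 e) (end2 e) =
            (if end1 e \<notin> A j then a1 e (h' (end1 e, e)) else 1) *
                (if end2 e \<notin> A j then a2 e (h' (end2 e, e)) else 1) / bp_I D mu (end1 e) (end2 e)" by simp
    qed
    show ?thesis unfolding QQ_def q1 q2 q3 q4 ..
  qed
  define Rf where "Rf F lam = (\<Sum>h\<in>PiE H2 Sd. QQ F lam h)" for F lam
  have inv: "Rf F (lam(j:=t)) = Rf F lam" for F lam t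
  proof -
    have "QQ F (lam(j:=t)) h = QQ F lam h" for h
    proof -
      have "(\<Prod>i\<in>{..<p}-{j}. block_tensor E d T (A i) (\<lambda>a b. of_real ((lam(j:=t)) i) * Op i a b) h) =
            (\<Prod>i\<in>{..<p}-{j}. block_tensor E d T (A i) (\<lambda>a b. of_real (lam i) * Op i a b) h)"
        by (rule prod.cong) auto
      then show ?thesis unfolding QQ_def by simp
    qed
    then show ?thesis unfolding Rf_def by simp
  qed
  have main: "Ztilde V E d D T mu p A Op F lam = Bc (of_real (lam j)) * Rf F lam"
    if F: "\<Union>F \<inter> A j = {}" for F lam
  proof -
    have pt: "(\<Prod>v\<in>V - (\<Union>i<p. A i). local_norm E d T v (\<lambda>e. h (v,e)))
      * (\<Prod>i<p. block_tensor E d T (A i) (\<lambda>a b. of_real (lam i) * Op i a b) h)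
      * (\<Prod>e\<in>E. if e \<in> F then perp D mu e h else rank1 D mu e h)
      = PP (of_real (lam j)) h * QQ F lam h" for h
    proof -
      have b: "(\<Prod>i<p. block_tensor E d T (A i) (\<lambda>a b. of_real (lam i) * Op i a b) h) =
          block_tensor E d T (A j) (\<lambda>a b. of_real (lam j) * Op j a b) h *
          (\<Prod>i\<in>{..<p}-{j}. block_tensor E d T (A i) (\<lambda>a b. of_real (lam i) * Op i a b) h)"
        using prod.remove[of "{..<p}" j] jp by simp
      have EjE: "Ej \<subseteq> E" by (auto simp: Ej_def)
      have c: "(\<Prod>e\<in>E. if e \<in> F then perp D mu e h else rank1 D mu e h) =
          (\<Prod>e\<in>E - Ej. if e \<in> F then perp D mu e h else rank1 D mu e h) *
          (\<Prod>e\<in>Ej. if e \<in> F then perp D mu e h else rank1 D mu e h)"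
        using prod.subset_diff[OF EjE finE] by simp
      have d: "(\<Prod>e\<in>Ej. if e \<in> F then perp D mu e h else rank1 D mu e h) =
          (\<Prod>e\<in>Ej. (if end1 e \<in> A j then a1 e (h (end1 e, e)) else 1) *
                (if end2 e \<in> A j then a2 e (h (end2 e, e)) else 1)) *
          (\<Prod>e\<in>Ej. (if end1 e \<notin> A j then a1 e (h (end1 e, e)) else 1) *
                (if end2 e \<notin> A j then a2 e (h (end2 e, e)) else 1) / bp_I D mu (end1 e) (end2 e))"
        unfolding prod.distrib[symmetric]
      proof (rule prod.cong[OF refl])
        fix e assume e: "e \<in> Ej"
        then have "e \<notin> F" using F by (auto simp: Ej_def)
        then show "(if e \<in> F then perp D mu e h else rank1 D mu e h) =
            (if end1 e \<in> A j then a1 e (h (end1 e, e)) else 1) *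
                (if end2 e \<in> A j then a2 e (h (end2 e, e)) else 1) *
            ((if end1 e \<notin> A j then a1 e (h (end1 e, e)) else 1) *
                (if end2 e \<notin> A j then a2 e (h (end2 e, e)) else 1) / bp_I D mu (end1 e) (end2 e))"
          by (simp add: rank1_def a1_def a2_def)
      qed
      show ?thesis unfolding b c d PP_def QQ_def by (simp add: mult_ac)
    qed
    have hc: "hconfs E D = PiE (H1 \<union> H2) Sd"
      unfolding hconfs_def Sd_def H1_def H2_def
      by (rule arg_cong2[where f=PiE]) auto
    have "Ztilde V E d D T mu p A Op F lam = (\<Sum>h\<in>PiE (H1 \<union> H2) Sd. PP (of_real (lam j)) h * QQ F lam h)"
      unfolding Ztilde_def hc pt ..
    also have "\<dots> = Bc (of_real (lam j)) * (\<Sum>h\<in>PiE H2 Sd. QQ F lam h)"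
      unfolding Bc_def
      by (rule sum_PiE_split[OF finH1 finH2]) (auto simp: H1_def H2_def intro: PPloc QQloc)
    finally show ?thesis unfolding Rf_def .
  qed
  show thesis by (rule that[OF hol main inv])
qed

definition Xop :: "'v set \<Rightarrow> (nat \<Rightarrow> 'v set) \<Rightarrow> (nat \<Rightarrow> ('v \<Rightarrow> nat) \<Rightarrow> ('v \<Rightarrow> nat) \<Rightarrow> complex)
   \<Rightarrow> nat \<Rightarrow> ('v \<Rightarrow> nat) \<Rightarrow> ('v \<Rightarrow> nat) \<Rightarrow> complex" where
  "Xop V A Op i s' s = Op i (restrict s' (A i)) (restrict s (A i)) * (if (\<forall>v\<in>V - A i. s' v = s v) then 1 else 0)"

lemma gen_op_Xop: "gen_op V p A Op lam s' s = (\<Sum>i<p. of_real (lam i) * Xop V A Op i s' s)"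
  unfolding gen_op_def Xop_def by (simp add: mult.assoc)

lemma exp_val_line_holo:
  assumes finV: "finite V" and kp: "k < p"
  shows "\<exists>Ec. Ec holomorphic_on UNIV \<and> (\<forall>t. exp_val V E d D T p A Op (y(k:=t)) = Ec (of_real t))"
proof -
  define C where "C = cfg d V"
  define M where "M = Xop V A Op k"
  define N where "N = (\<lambda>s' s. \<Sum>i\<in>{..<p}-{k}. of_real (y i) * Xop V A Op i s' s)"
  define Ec where "Ec z = (\<Sum>s'\<in>C. \<Sum>s\<in>C. cnj (peps_amp V E D T s')
        * mat_exp C (lin z M N) s' s * peps_amp V E D T s)" for z
  have finC: "finite C" unfolding C_def by (rule finite_cfg[OF finV])
  have g: "gen_op V p A Op (y(k:=t)) = lin (of_real t) M N" for t
  proof (intro ext)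
    fix s' s
    have "gen_op V p A Op (y(k:=t)) s' s = of_real t * Xop V A Op k s' s +
            (\<Sum>i\<in>{..<p}-{k}. of_real ((y(k:=t)) i) * Xop V A Op i s' s)"
      unfolding gen_op_Xop using sum.remove[of "{..<p}" k "\<lambda>i. of_real ((y(k:=t)) i) * Xop V A Op i s' s"] kp
      by simp
    also have "(\<Sum>i\<in>{..<p}-{k}. of_real ((y(k:=t)) i) * Xop V A Op i s' s) = N s' s"
      unfolding N_def by (rule sum.cong) auto
    finally have *: "gen_op V p A Op (y(k:=t)) s' s = of_real t * Xop V A Op k s' s + N s' s" .
    show "gen_op V p A Op (y(k:=t)) s' s = lin (of_real t) M N s' s"
      using * by (simp only: lin_def M_def)
  qed
  have "Ec holomorphic_on UNIV"
    unfolding Ec_def by (intro holomorphic_intros mat_exp_lin_holo finC) auto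
  moreover have "\<forall>t. exp_val V E d D T p A Op (y(k:=t)) = Ec (of_real t)"
    by (simp add: exp_val_def Ec_def g C_def)
  ultimately show ?thesis by blast
qed

lemma exp_val_pos_near0:
  assumes finV: "finite V"
    and norm_pos: "(\<Sum>s\<in>cfg d V. (cmod (peps_amp V E D T s))\<^sup>2) > 0"
  shows "\<exists>\<delta>>0. \<forall>y\<in>nbhd0 p \<delta>. Re (exp_val V E d D T p A Op y) > 0"
proof -
  define C where "C = cfg d V"
  define ps where "ps = peps_amp V E D T"
  define X where "X = Xop V A Op"
  define K where "K = (\<Sum>a\<in>C. \<Sum>b\<in>C. \<Sum>i<p. cmod (X i a b))"
  define Psi where "Psi = (\<Sum>a\<in>C. \<Sum>b\<in>C. cmod (ps a) * cmod (ps b))"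
  define N0 where "N0 = (\<Sum>s\<in>C. (cmod (ps s))\<^sup>2)"
  define c where "c = N0 / (Psi + 1)"
  define \<delta> where "\<delta> = ln (1 + c) / (K + 1)"
  have finC: "finite C" unfolding C_def by (rule finite_cfg[OF finV])
  have K0: "K \<ge> 0" unfolding K_def by (intro sum_nonneg) auto
  have Psi0: "Psi \<ge> 0" unfolding Psi_def by (intro sum_nonneg) auto
  have N0p: "N0 > 0" using norm_pos by (simp add: N0_def C_def ps_def)
  have c0: "c > 0" unfolding c_def using N0p Psi0 by simp
  have d0: "\<delta> > 0" unfolding \<delta>_def using c0 K0 by simp
  have Psic: "Psi * c < N0"
  proof -
    have "Psi * c = N0 * (Psi / (Psi + 1))" by (simp add: c_def field_simps)
    also have "\<dots> < N0 * 1" using N0p Psi0 by (intro mult_strict_left_mono) auto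
    finally show ?thesis by simp
  qed
  have edK: "exp (\<delta> * K) - 1 \<le> c"
  proof -
    have "\<delta> * K \<le> \<delta> * (K + 1)" using d0 by simp
    also have "\<dots> = ln (1 + c)" unfolding \<delta>_def using K0 by simp
    finally have "exp (\<delta> * K) \<le> exp (ln (1 + c))" by simp
    then show ?thesis using c0 by simp
  qed
  have nrmG: "nrm C (gen_op V p A Op y) \<le> \<delta> * K" if y: "y \<in> nbhd0 p \<delta>" for y
  proof -
    have "nrm C (gen_op V p A Op y) \<le> (\<Sum>a\<in>C. \<Sum>b\<in>C. \<Sum>i<p. \<delta> * cmod (X i a b))"
      unfolding nrm_def
    proof (intro sum_mono)
      fix a b
      have "cmod (gen_op V p A Op y a b) \<le> (\<Sum>i<p. cmod (of_real (y i) * X i a b))"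
        unfolding gen_op_Xop X_def by (rule norm_sum)
      also have "\<dots> \<le> (\<Sum>i<p. \<delta> * cmod (X i a b))"
      proof (intro sum_mono)
        fix i assume "i \<in> {..<p}"
        then have "\<bar>y i\<bar> \<le> \<delta>" using y by (simp add: nbhd0_def less_imp_le)
        then show "cmod (of_real (y i) * X i a b) \<le> \<delta> * cmod (X i a b)"
          by (simp add: norm_mult mult_right_mono)
      qed
      finally show "cmod (gen_op V p A Op y a b) \<le> (\<Sum>i<p. \<delta> * cmod (X i a b))" .
    qed
    also have "\<dots> = \<delta> * K" by (simp add: K_def sum_distrib_left)
    finally show ?thesis .
  qed
  have Nrm: "(\<Sum>a\<in>C. \<Sum>b\<in>C. cnj (ps a) * mat_id a b * ps b) = of_real N0"
  proof -
    have "(\<Sum>a\<in>C. \<Sum>b\<in>C. cnj (ps a) * mat_id a b * ps b) = (\<Sum>a\<in>C. cnj (ps a) * ps a)"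
      by (rule sum.cong[OF refl]) (simp add: mat_id_def finC if_distrib if_distribR sum.delta cong: if_cong)
    also have "\<dots> = (\<Sum>a\<in>C. of_real ((cmod (ps a))\<^sup>2))"
      by (rule sum.cong[OF refl]) (metis complex_norm_square mult.commute)
    finally show ?thesis by (simp add: N0_def)
  qed
  have "Re (exp_val V E d D T p A Op y) > 0" if y: "y \<in> nbhd0 p \<delta>" for y
  proof -
    define G where "G = gen_op V p A Op y"
    have ev: "exp_val V E d D T p A Op y = (\<Sum>a\<in>C. \<Sum>b\<in>C. cnj (ps a) * mat_exp C G a b * ps b)"
      by (simp add: exp_val_def C_def ps_def G_def)
    have diff: "exp_val V E d D T p A Op y - of_real N0 =
        (\<Sum>a\<in>C. \<Sum>b\<in>C. cnj (ps a) * (mat_exp C G a b - mat_id a b) * ps b)"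
      unfolding ev Nrm[symmetric] by (simp add: sum_subtractf algebra_simps)
    have "cmod (exp_val V E d D T p A Op y - of_real N0) \<le>
        (\<Sum>a\<in>C. \<Sum>b\<in>C. cmod (ps a) * (exp (\<delta> * K) - 1) * cmod (ps b))"
      unfolding diff
    proof (rule order_trans[OF norm_sum], intro sum_mono, rule order_trans[OF norm_sum], intro sum_mono)
      fix a b assume a: "a \<in> C"
      have "cmod (mat_exp C G a b - mat_id a b) \<le> exp (nrm C G) - 1"
        by (rule mat_exp_minus_id[OF finC a])
      also have "\<dots> \<le> exp (\<delta> * K) - 1" using nrmG[OF y] by (simp add: G_def)
      finally have "cmod (mat_exp C G a b - mat_id a b) \<le> exp (\<delta> * K) - 1" .
      then show "cmod (cnj (ps a) * (mat_exp C G a b - mat_id a b) * ps b)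
          \<le> cmod (ps a) * (exp (\<delta> * K) - 1) * cmod (ps b)"
        by (simp add: norm_mult mult_left_mono mult_right_mono)
    qed
    also have "\<dots> = Psi * (exp (\<delta> * K) - 1)"
      by (simp add: Psi_def sum_distrib_right sum_distrib_left mult_ac)
    also have "\<dots> \<le> Psi * c" using edK Psi0 by (simp add: mult_left_mono)
    finally have "cmod (exp_val V E d D T p A Op y - of_real N0) < N0" using Psic by simp
    then have "\<bar>Re (exp_val V E d D T p A Op y) - N0\<bar> < N0"
      using abs_Re_le_cmod[of "exp_val V E d D T p A Op y - of_real N0"] by simp
    then show ?thesis by linarith
  qed
  then show ?thesis using d0 by blast
qed

lemma weight_mp_zero:
  fixes V :: "'v set" and E :: "'v set set" and d :: "'v \<Rightarrow> nat" and D :: "'v set \<Rightarrow> nat"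
    and T :: "'v \<Rightarrow> nat \<Rightarrow> ('v set \<Rightarrow> nat) \<Rightarrow> complex"
    and mu :: "'v \<Rightarrow> 'v \<Rightarrow> nat \<times> nat \<Rightarrow> complex"
    and p :: nat and A :: "nat \<Rightarrow> 'v set"
    and Op :: "nat \<Rightarrow> ('v \<Rightarrow> nat) \<Rightarrow> ('v \<Rightarrow> nat) \<Rightarrow> complex"
  assumes finV: "finite V"
    and graph: "E \<subseteq> {{u, w} | u w. u \<in> V \<and> w \<in> V \<and> u \<noteq> w}"
    and A_sub: "\<forall>i<p. A i \<subseteq> V"
    and A_disj: "\<forall>i<p. \<forall>j<p. i \<noteq> j \<longrightarrow> A i \<inter> A j = {}"
    and jp: "j < p" and eps: "\<epsilon> > 0"
    and Z0nz: "\<forall>lam\<in>nbhd0 p \<epsilon>. Ztilde V E d D T mu p A Op {} lam \<noteq> 0"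
    and Wsupp: "cluster_supp W \<inter> A j = {}"
  shows "mixed_partial [0..<p] (cluster_weight V E d D T mu p A Op W) (\<lambda>_. 0) = 0"
proof -
  obtain Bc :: "complex \<Rightarrow> complex" and Rf where hB: "Bc holomorphic_on UNIV" and
      Rf1: "\<And>F lam. \<Union>F \<inter> A j = {} \<Longrightarrow> Ztilde V E d D T mu p A Op F lam = Bc (of_real (lam j)) * Rf F lam"
      and Rf2: "\<And>F lam t. Rf F (lam(j:=t)) = Rf F lam"
    by (rule Ztilde_factor[OF finV graph A_sub A_disj jp, where d=d and D=D and T=T and mu=mu and Op=Op]) blast
  have R0: "\<And>lam. Ztilde V E d D T mu p A Op {} lam = Bc (of_real (lam j)) * Rf {} lam"
    using Rf1[of "{}"] by auto
  define wt where "wt = cluster_weight V E d D T mu p A Op W"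
  have ratio: "Ztilde V E d D T mu p A Op l lam / Ztilde V E d D T mu p A Op {} lam =
               Ztilde V E d D T mu p A Op l (lam(j:=0)) / Ztilde V E d D T mu p A Op {} (lam(j:=0))"
    if l: "l \<in># W" and lam: "lam \<in> nbhd0 p \<epsilon>" for l lam
  proof -
    have "\<Union>l \<subseteq> cluster_supp W" using l by (auto simp: cluster_supp_def)
    then have lA: "\<Union>l \<inter> A j = {}" using Wsupp by blast
    have lam0: "lam(j:=0) \<in> nbhd0 p \<epsilon>" using lam eps by (auto simp: nbhd0_def)
    have z1: "Ztilde V E d D T mu p A Op l lam = Bc (of_real (lam j)) * Rf l lam"
         "Ztilde V E d D T mu p A Op l (lam(j:=0)) = Bc (of_real ((lam(j:=0)) j)) * Rf l (lam(j:=0))"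
      using Rf1[OF lA] by blast+
    have "Ztilde V E d D T mu p A Op {} lam \<noteq> 0" using Z0nz lam by blast
    then have nz1: "Bc (of_real (lam j)) \<noteq> 0" using R0(1)[of lam] by auto
    have "Ztilde V E d D T mu p A Op {} (lam(j:=0)) \<noteq> 0" using Z0nz lam0 by blast
    then have nz2: "Bc (of_real ((lam(j:=0)) j)) \<noteq> 0" using R0(1)[of "lam(j:=0)"] by auto
    have "Ztilde V E d D T mu p A Op l lam / Ztilde V E d D T mu p A Op {} lam = Rf l lam / Rf {} lam"
      unfolding z1(1) R0(1)[of lam] by (rule mult_divide_mult_cancel_left[OF nz1])
    moreover have "Ztilde V E d D T mu p A Op l (lam(j:=0)) / Ztilde V E d D T mu p A Op {} (lam(j:=0))
         = Rf l (lam(j:=0)) / Rf {} (lam(j:=0))"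
      unfolding z1(2) R0(1)[of "lam(j:=0)"] by (rule mult_divide_mult_cancel_left[OF nz2])
    moreover have "Rf l (lam(j:=0)) = Rf l lam" "Rf {} (lam(j:=0)) = Rf {} lam"
      using Rf2 by auto
    ultimately show ?thesis by simp
  qed
  have weq: "wt lam = wt (lam(j:=0))" if lam: "lam \<in> nbhd0 p \<epsilon>" for lam
    unfolding wt_def cluster_weight_def
    by (rule arg_cong[where f=prod_mset], rule image_mset_cong) (use ratio lam in blast)
  have "mixed_partial [0..<p] wt (\<lambda>_. 0) = mixed_partial [0..<p] (\<lambda>lam. wt (lam(j:=0))) (\<lambda>_. 0)"
    by (rule mp_local[where \<delta>=\<epsilon>]) (use weq eps in \<open>auto simp: nbhd0_def\<close>)
  also have "\<dots> = 0"
    by (rule mp_zero_if_invariant) (use jp in auto)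
  finally show ?thesis by (simp add: wt_def)
qed

lemma upt_split2: "2 \<le> p \<Longrightarrow> [0..<p] = [0..<p-2] @ [p-2, p-1]"
proof -
  assume "2 \<le> p"
  then obtain q where "p = q + 2" by (metis add.commute le_Suc_ex)
  then show ?thesis by simp
qed

theorem mainTheorem11:
  fixes V :: "'v set" and E :: "'v set set" and d :: "'v \<Rightarrow> nat" and D :: "'v set \<Rightarrow> nat"
    and T :: "'v \<Rightarrow> nat \<Rightarrow> ('v set \<Rightarrow> nat) \<Rightarrow> complex"
    and mu :: "'v \<Rightarrow> 'v \<Rightarrow> nat \<times> nat \<Rightarrow> complex"
    and p :: nat and A :: "nat \<Rightarrow> 'v set"
    and Op :: "nat \<Rightarrow> ('v \<Rightarrow> nat) \<Rightarrow> ('v \<Rightarrow> nat) \<Rightarrow> complex"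
  assumes finV: "finite V"
    and graph: "E \<subseteq> {{u, w} | u w. u \<in> V \<and> w \<in> V \<and> u \<noteq> w}"
    and norm_pos: "(\<Sum>s\<in>cfg d V. (cmod (peps_amp V E D T s))\<^sup>2) > 0"
    and bp: "is_bp_fixed_point E d D T mu"
    and I_nz: "\<forall>v w. {v, w} \<in> E \<longrightarrow> bp_I D mu v w \<noteq> 0"
    and p2: "p \<ge> 2"
    and A_sub: "\<forall>i<p. A i \<subseteq> V"
    and A_disj: "\<forall>i<p. \<forall>j<p. i \<noteq> j \<longrightarrow> A i \<inter> A j = {}"
    and expansion: "\<exists>\<epsilon>>0. \<exists>L. continuous_on (nbhd0 p \<epsilon>) L \<and>
        (\<forall>lam\<in>nbhd0 p \<epsilon>.
           Ztilde V E d D T mu p A Op {} lam \<noteq> 0 \<and>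
           exp (L lam) = Ztilde V E d D T mu p A Op {} lam \<and>
           (\<lambda>W. complex_of_real (ursell W) * cluster_weight V E d D T mu p A Op W lam)
              summable_on conn_clusters E p A \<and>
           Ln (exp_val V E d D T p A Op lam) = L lam +
              (\<Sum>\<^sub>\<infinity>W\<in>conn_clusters E p A.
                 complex_of_real (ursell W) * cluster_weight V E d D T mu p A Op W lam))"
    and termwise: "((\<lambda>W. complex_of_real (ursell W)
                      * mixed_partial [0..<p] (cluster_weight V E d D T mu p A Op W) (\<lambda>_. 0))
        has_sum (mixed_partial [0..<p]
                  (\<lambda>lam. \<Sum>\<^sub>\<infinity>W\<in>conn_clusters E p A.
                     complex_of_real (ursell W) * cluster_weight V E d D T mu p A Op W lam)
                  (\<lambda>_. 0)))
        (conn_clusters E p A)"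
  shows "((\<lambda>W. complex_of_real (ursell W)
              * mixed_partial [0..<p] (cluster_weight V E d D T mu p A Op W) (\<lambda>_. 0))
         has_sum conn_corr V E d D T p A Op)
         {W \<in> conn_clusters E p A. \<forall>i<p. cluster_supp W \<inter> A i \<noteq> {}}"
proof -
  obtain \<epsilon> L where eps: "\<epsilon> > 0" and contL: "continuous_on (nbhd0 p \<epsilon>) L"
    and props: "\<forall>lam\<in>nbhd0 p \<epsilon>.
           Ztilde V E d D T mu p A Op {} lam \<noteq> 0 \<and>
           exp (L lam) = Ztilde V E d D T mu p A Op {} lam \<and>
           (\<lambda>W. complex_of_real (ursell W) * cluster_weight V E d D T mu p A Op W lam)
              summable_on conn_clusters E p A \<and>
           Ln (exp_val V E d D T p A Op lam) = L lam +
              (\<Sum>\<^sub>\<infinity>W\<in>conn_clusters E p A.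
                 complex_of_real (ursell W) * cluster_weight V E d D T mu p A Op W lam)"
    using expansion by blast
  define Fn where "Fn = (\<lambda>lam. Ln (exp_val V E d D T p A Op lam))"
  define Sf where "Sf = (\<lambda>lam. \<Sum>\<^sub>\<infinity>W\<in>conn_clusters E p A.
                 complex_of_real (ursell W) * cluster_weight V E d D T mu p A Op W lam)"
  define Z0 where "Z0 = Ztilde V E d D T mu p A Op {}"
  have Z0nz: "\<forall>lam\<in>nbhd0 p \<epsilon>. Z0 lam \<noteq> 0" using props by (simp add: Z0_def)
  have expL: "\<And>lam. lam \<in> nbhd0 p \<epsilon> \<Longrightarrow> exp (L lam) = Z0 lam" using props by (simp add: Z0_def)
  have FLS: "\<And>lam. lam \<in> nbhd0 p \<epsilon> \<Longrightarrow> Fn lam = L lam + Sf lam"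
    using props by (simp add: Fn_def Sf_def)
  have zero: "complex_of_real (ursell W)
              * mixed_partial [0..<p] (cluster_weight V E d D T mu p A Op W) (\<lambda>_. 0) = 0"
    if W: "W \<in> conn_clusters E p A" "\<not> (\<forall>i<p. cluster_supp W \<inter> A i \<noteq> {})" for W
  proof -
    obtain j where j: "j < p" "cluster_supp W \<inter> A j = {}" using W(2) by blast
    have "mixed_partial [0..<p] (cluster_weight V E d D T mu p A Op W) (\<lambda>_. 0) = 0"
      by (rule weight_mp_zero[OF finV graph A_sub A_disj j(1) eps _ j(2)]) (use Z0nz in \<open>simp add: Z0_def\<close>)
    then show ?thesis by simp
  qed
  have key: "mixed_partial [0..<p] Fn (\<lambda>_. 0) = mixed_partial [0..<p] Sf (\<lambda>_. 0)"
  proof -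
    obtain \<delta>0 where d0: "\<delta>0 > 0" and pos: "\<forall>y\<in>nbhd0 p \<delta>0. Re (exp_val V E d D T p A Op y) > 0"
      using exp_val_pos_near0[OF finV norm_pos, of p A Op] by blast
    define \<delta> where "\<delta> = min \<epsilon> \<delta>0"
    have dpos: "\<delta> > 0" using d0 eps by (simp add: \<delta>_def)
    have U1: "y \<in> nbhd0 p \<epsilon>" and U2: "y \<in> nbhd0 p \<delta>0" if "y \<in> nbhd0 p \<delta>" for y
      using that by (auto simp: nbhd0_def \<delta>_def)
    define k where "k = p - 1"
    have kp: "k < p" using p2 by (simp add: k_def)
    obtain Bc :: "complex \<Rightarrow> complex" and Rf where hB: "Bc holomorphic_on UNIV" and
      Rf1: "\<And>F lam. \<Union>F \<inter> A k = {} \<Longrightarrow> Ztilde V E d D T mu p A Op F lam = Bc (of_real (lam k)) * Rf F lam"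
      and Rf2: "\<And>F lam t. Rf F (lam(k:=t)) = Rf F lam"
      by (rule Ztilde_factor[OF finV graph A_sub A_disj kp, where d=d and D=D and T=T and mu=mu and Op=Op]) blast
    have Z0f: "\<And>lam. Z0 lam = Bc (of_real (lam k)) * Rf {} lam" using Rf1[of "{}"] by (simp add: Z0_def)
    define \<phi> where "\<phi> t = deriv Bc (of_real t) / Bc (of_real t)" for t
    have mpk: "\<And>f y. mixed_partial [k] f y = vector_derivative (\<lambda>t. f (y(k:=t))) (at (y k))"
      by simp
    have claim1: "mixed_partial [k] Fn y = \<phi> (y k) + mixed_partial [k] Sf y" if yU: "y \<in> nbhd0 p \<delta>" for y
    proof -
      have yE: "y \<in> nbhd0 p \<epsilon>" by (rule U1[OF yU])
      have yk: "\<bar>y k\<bar> < \<epsilon>" using yE kp by (simp add: nbhd0_def)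
      obtain Ec where hE: "Ec holomorphic_on UNIV"
        and eE: "\<forall>t. exp_val V E d D T p A Op (y(k:=t)) = Ec (of_real t)"
        using exp_val_line_holo[OF finV kp, of E d D T A Op y] by blast
      have "Re (Ec (of_real (y k))) > 0" using eE pos U2[OF yU] by (metis fun_upd_triv)
      then have nonpos: "Ec (of_real (y k)) \<notin> \<real>\<^sub>\<le>\<^sub>0" by (simp add: complex_nonpos_Reals_iff)
      have dEc: "(Ec has_field_derivative deriv Ec (of_real (y k))) (at (of_real (y k)))"
        by (rule holomorphic_derivI[OF hE open_UNIV UNIV_I])
      have lineE: "((\<lambda>t. Ec (of_real t)) has_vector_derivative deriv Ec (of_real (y k))) (at (y k))"
        using has_vector_derivative_real_field[OF dEc, of UNIV] by simp
      define F' where "F' = deriv Ec (of_real (y k)) * inverse (Ec (of_real (y k)))"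
      have "((Ln \<circ> (\<lambda>t. Ec (of_real t))) has_vector_derivative F') (at (y k))"
        unfolding F'_def by (rule field_vector_diff_chain_at[OF lineE has_field_derivative_Ln[OF nonpos]])
      moreover have "(Ln \<circ> (\<lambda>t. Ec (of_real t))) = (\<lambda>t. Fn (y(k:=t)))"
        using eE by (simp add: Fn_def o_def)
      ultimately have dF: "((\<lambda>t. Fn (y(k:=t))) has_vector_derivative F') (at (y k))" by simp
      define r where "r = \<epsilon> - \<bar>y k\<bar>"
      have r0: "r > 0" using yk by (simp add: r_def)
      have inU: "y(k:=s) \<in> nbhd0 p \<epsilon>" if "s \<in> ball (y k) r" for s
      proof -
        have "\<bar>s\<bar> < \<epsilon>" using that by (simp add: r_def dist_real_def)
        then show ?thesis using yE by (auto simp: nbhd0_def)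
      qed
      have cy: "continuous_on UNIV (\<lambda>s::real. y(k:=s))"
      proof (rule continuous_on_coordinatewise_then_product)
        fix i show "continuous_on UNIV (\<lambda>s::real. (y(k:=s)) i)"
          by (cases "i = k") (auto intro: continuous_intros)
      qed
      have "continuous_on (ball (y k) r) (\<lambda>s. L (y(k:=s)))"
        by (rule continuous_on_compose2[OF contL continuous_on_subset[OF cy]]) (use inU in auto)
      then have contg: "continuous (at (y k)) (\<lambda>s. L (y(k:=s)))"
        using continuous_on_eq_continuous_at[OF open_ball, of "y k" r "\<lambda>s. L (y(k:=s))"] r0 by simp
      have ev: "exp (L (y(k:=s))) = Bc (of_real s) * Rf {} y" if "\<bar>s - y k\<bar> < r" for s
      proof -
        have "s \<in> ball (y k) r" using that by (simp add: dist_real_def abs_minus_commute)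
        then have "exp (L (y(k:=s))) = Z0 (y(k:=s))" using expL inU by blast
        also have "\<dots> = Bc (of_real s) * Rf {} y" using Z0f Rf2 by simp
        finally show ?thesis .
      qed
      have dB: "((\<lambda>z. Bc z * Rf {} y) has_field_derivative deriv Bc (of_real (y k)) * Rf {} y) (at (of_real (y k)))"
        by (rule DERIV_cmult_right[OF holomorphic_derivI[OF hB open_UNIV UNIV_I]])
      have hd: "((\<lambda>s. Bc (of_real s) * Rf {} y) has_vector_derivative deriv Bc (of_real (y k)) * Rf {} y) (at (y k))"
        using has_vector_derivative_real_field[OF dB, of UNIV] by simp
      have nz: "Bc (of_real (y k)) * Rf {} y \<noteq> 0" using Z0nz yE Z0f by metis
      have dL0: "((\<lambda>s. L (y(k:=s))) has_vector_derivative
                  (deriv Bc (of_real (y k)) * Rf {} y) / (Bc (of_real (y k)) * Rf {} y)) (at (y k))"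
        by (rule log_deriv[OF contg r0 ev hd nz])
      have "(deriv Bc (of_real (y k)) * Rf {} y) / (Bc (of_real (y k)) * Rf {} y) = \<phi> (y k)"
        using nz by (simp add: \<phi>_def)
      with dL0 have dL: "((\<lambda>s. L (y(k:=s))) has_vector_derivative \<phi> (y k)) (at (y k))" by simp
      have dFL: "((\<lambda>s. Fn (y(k:=s)) - L (y(k:=s))) has_vector_derivative F' - \<phi> (y k)) (at (y k))"
        by (rule has_vector_derivative_diff[OF dF dL])
      have dS: "((\<lambda>s. Sf (y(k:=s))) has_vector_derivative F' - \<phi> (y k)) (at (y k))"
      proof (rule has_vector_derivative_transform_within_open[OF dFL open_ball])
        show "y k \<in> ball (y k) r" using r0 by simp
        fix s assume "s \<in> ball (y k) r"
        then show "Fn (y(k:=s)) - L (y(k:=s)) = Sf (y(k:=s))" using FLS inU by force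
      qed
      show ?thesis unfolding mpk vector_derivative_at[OF dF] vector_derivative_at[OF dS] by simp
    qed
    have k1: "p - 2 \<noteq> k" "p - 2 < p" using p2 by (auto simp: k_def)
    have mp2: "\<And>f x. mixed_partial [p-2, k] f x =
        vector_derivative (\<lambda>t. mixed_partial [k] f (x(p-2:=t))) (at (x (p-2)))"
      by (simp only: mixed_partial.simps(2)[of "p-2" "[k]"])
    have claim2: "mixed_partial [p-2, k] Fn x = mixed_partial [p-2, k] Sf x" if xU: "x \<in> nbhd0 p \<delta>" for x
    proof -
      have xr: "\<bar>x (p-2)\<bar> < \<delta>" using xU k1 by (simp add: nbhd0_def)
      have "vector_derivative (\<lambda>t. mixed_partial [k] Fn (x(p-2:=t))) (at (x (p-2))) =
            vector_derivative (\<lambda>t. \<phi> (x k) + mixed_partial [k] Sf (x(p-2:=t))) (at (x (p-2)))"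
      proof (rule vd_local[of "\<delta> - \<bar>x (p-2)\<bar>"])
        show "0 < \<delta> - \<bar>x (p-2)\<bar>" using xr by simp
        fix t assume "\<bar>t - x (p-2)\<bar> < \<delta> - \<bar>x (p-2)\<bar>"
        then have "\<bar>t\<bar> < \<delta>" by linarith
        then have "x(p-2:=t) \<in> nbhd0 p \<delta>" using xU by (auto simp: nbhd0_def)
        from claim1[OF this] show "mixed_partial [k] Fn (x(p-2:=t)) = \<phi> (x k) + mixed_partial [k] Sf (x(p-2:=t))"
          using k1 by simp
      qed
      also have "\<dots> = vector_derivative (\<lambda>t. mixed_partial [k] Sf (x(p-2:=t))) (at (x (p-2)))"
        by (rule vd_shift)
      finally show ?thesis unfolding mp2 .
    qed
    have split: "[0..<p] = [0..<p-2] @ [p-2, k]" using upt_split2[OF p2] by (simp add: k_def)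
    have "mixed_partial [0..<p] Fn (\<lambda>_. 0) = mixed_partial [0..<p-2] (mixed_partial [p-2, k] Fn) (\<lambda>_. 0)"
      by (simp only: split mp_append)
    also have "\<dots> = mixed_partial [0..<p-2] (mixed_partial [p-2, k] Sf) (\<lambda>_. 0)"
    proof (rule mp_local[where \<delta>=\<delta> and p=p])
      show "\<forall>i\<in>set [0..<p-2]. i < p" by auto
      show "\<And>y. y \<in> nbhd0 p \<delta> \<Longrightarrow> mixed_partial [p-2, k] Fn y = mixed_partial [p-2, k] Sf y"
        by (rule claim2)
      show "(\<lambda>_. 0) \<in> nbhd0 p \<delta>" using dpos by (simp add: nbhd0_def)
    qed
    also have "\<dots> = mixed_partial [0..<p] Sf (\<lambda>_. 0)"
      by (simp only: split mp_append)
    finally show ?thesis .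
  qed
  have "conn_corr V E d D T p A Op = mixed_partial [0..<p] Sf (\<lambda>_. 0)"
    unfolding conn_corr_def key[unfolded Fn_def, symmetric] ..
  then have ts: "((\<lambda>W. complex_of_real (ursell W)
                      * mixed_partial [0..<p] (cluster_weight V E d D T mu p A Op W) (\<lambda>_. 0))
        has_sum conn_corr V E d D T p A Op) (conn_clusters E p A)"
    using termwise by (simp add: Sf_def)
  show ?thesis
    by (rule has_sum_cong_neutral[THEN iffD2, OF _ _ _ ts]) (use zero in auto)
qed

end
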